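(* Let $p$ be an odd prime and $q\ge1$ an integer. Let $m,k$ be nonnegative integers and $r,s$ integers with $r\ge s\ge q$ and $kp^s\le mp^r$. Let $e_0=v_p\!\left(\binom{mp^r}{kp^s}\right)$ be the exponent of $p$ dividing $\binom{mp^r}{kp^s}$. Then $$\frac{1}{p^{e_0}}\binom{mp^r}{kp^s}\equiv\frac{1}{p^{e_0}}\binom{mp^{r-1}}{kp^{s-1}}\pmod{p^q}$$ (as a congruence in the $p$-adic integers).
   Context: $v_p$ denotes the $p$-adic valuation. *)

theory Defs
  imports "HOL-Computational_Algebra.Primes"
begin

end

theory Submission
  imports Defs "HOL-Number_Theory.Cong"
begin

definition FF :: "nat \<Rightarrow> nat \<Rightarrow> nat" where
  "FF p n = (\<Prod>j\<in>{1..n}. if p dvd j then 1 else j)"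

lemma FF_0[simp]: "FF p 0 = 1" by (simp add: FF_def)

lemma FF_Suc: "FF p (Suc n) = FF p n * (if p dvd Suc n then 1 else Suc n)"
  unfolding FF_def by (simp add: atLeastAtMostSuc_conv mult.commute)

lemma FF_coprime: assumes "prime p" shows "coprime p (FF p n)"
proof (induction n)
  case 0 then show ?case by simp
next
  case (Suc n)
  have "coprime p (if p dvd Suc n then 1 else Suc n)"
    using assms prime_imp_coprime by auto
  then show ?case using Suc by (simp add: FF_Suc)
qed

lemma fact_FF: assumes "p > 0"
  shows "fact n = p ^ (n div p) * fact (n div p) * FF p n"
proof (induction n)
  case 0 then show ?case by simp
next
  case (Suc n)
  show ?case
  proof (cases "p dvd Suc n")
    case True
    then have d: "Suc n div p = Suc (n div p)" using assms
      by (simp add: div_Suc dvd_eq_mod_eq_0)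
    have e0: "p * (Suc n div p) = Suc n" using True by simp
    have e: "Suc n = p * Suc (n div p)" using e0 d by simp
    have "fact (Suc n) = (Suc n) * (fact n :: nat)" by simp
    also have "\<dots> = p * Suc (n div p) * (p ^ (n div p) * fact (n div p) * FF p n)"
      using Suc e by (metis of_nat_id)
    also have "\<dots> = p ^ (Suc n div p) * fact (Suc n div p) * FF p (Suc n)"
      unfolding d using True by (simp only: FF_Suc if_True fact_Suc power_Suc of_nat_id mult_1_right ac_simps)
    finally show ?thesis .
  next
    case False
    then have d: "Suc n div p = n div p" using assms
      by (simp add: div_Suc dvd_eq_mod_eq_0)
    have "fact (Suc n) = (Suc n) * (fact n :: nat)" by simp
    also have "\<dots> = p ^ (Suc n div p) * fact (Suc n div p) * FF p (Suc n)"
      using Suc d False by (simp add: FF_Suc algebra_simps)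
    finally show ?thesis .
  qed
qed

lemma fact_FF_mult: assumes "p > 0" shows "fact (a * p) = p ^ a * fact a * FF p (a * p)"
  using fact_FF[OF assms, of "a*p"] assms by simp

lemma FF_cong: assumes "p dvd N" "p ^ q dvd N"
  shows "[FF p (N + M) = FF p N * FF p M] (mod p ^ q)"
proof (induction M)
  case 0 then show ?case by simp
next
  case (Suc M)
  have iff: "p dvd Suc (N + M) \<longleftrightarrow> p dvd Suc M"
    using assms(1) by (metis add_Suc_right dvd_add_right_iff)
  have c: "[Suc (N + M) = Suc M] (mod p ^ q)"
  proof -
    have "[N = 0] (mod p ^ q)" using assms(2) by (simp add: cong_0_iff)
    from cong_add[OF this cong_refl[of "Suc M"]] show ?thesis by simp
  qed
  have "[FF p (N + M) * (if p dvd Suc (N+M) then 1 else Suc (N+M))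
        = (FF p N * FF p M) * (if p dvd Suc M then 1 else Suc M)] (mod p ^ q)"
  proof (rule cong_mult[OF Suc.IH])
    show "[(if p dvd Suc (N+M) then 1 else Suc (N+M)) = (if p dvd Suc M then 1 else Suc M)] (mod p^q)"
      unfolding iff by (cases "p dvd Suc M") (simp_all only: if_True if_False c cong_refl)
  qed
  then show ?case by (simp add: FF_Suc mult.assoc)
qed

lemma key_identity:
  assumes "p > 0" "b \<le> a"
  shows "FF p (b*p) * FF p ((a-b)*p) * ((a*p) choose (b*p)) = (a choose b) * FF p (a*p)"
proof -
  have bp: "b*p \<le> a*p" using assms by simp
  have h1: "fact (b*p) * fact (a*p - b*p) * ((a*p) choose (b*p)) = (fact (a*p) :: nat)"
    using binomial_fact_lemma[OF bp] .
  have h2: "fact b * fact (a - b) * (a choose b) = (fact a :: nat)"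
    using binomial_fact_lemma[OF assms(2)] .
  have sub: "a*p - b*p = (a-b)*p" by (simp add: diff_mult_distrib)
  have pa: "p ^ a = p ^ b * p ^ (a - b)" using assms by (simp add: power_add[symmetric])
  have "(p^a * fact b * fact (a-b)) * (FF p (b*p) * FF p ((a-b)*p) * ((a*p) choose (b*p)))
      = (p^a * fact b * fact (a-b)) * ((a choose b) * FF p (a*p))"
  proof -
    have "(p^a * fact b * fact (a-b)) * (FF p (b*p) * FF p ((a-b)*p) * ((a*p) choose (b*p)))
        = fact (b*p) * fact ((a-b)*p) * ((a*p) choose (b*p))"
      using fact_FF_mult[OF assms(1), of b] fact_FF_mult[OF assms(1), of "a-b"] pa
      by (simp add: ac_simps)
    also have "\<dots> = fact (a*p)" using h1 sub by simp
    also have "\<dots> = p ^ a * fact a * FF p (a*p)" using fact_FF_mult[OF assms(1)] .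
    also have "\<dots> = (p^a * fact b * fact (a-b)) * ((a choose b) * FF p (a*p))"
      using h2[symmetric] by (simp add: ac_simps)
    finally show ?thesis .
  qed
  moreover have "p^a * fact b * fact (a-b) \<noteq> (0::nat)" using assms by simp
  ultimately show ?thesis by (rule mult_left_cancel[THEN iffD1, rotated])
qed

lemma main:
  fixes p a b q :: nat
  assumes "prime p" "b \<le> a" "p ^ q dvd (a-b)*p"
  shows "int p ^ (multiplicity p ((a*p) choose (b*p)) + q) dvd
           int ((a*p) choose (b*p)) - int (a choose b)"
proof -
  define C1 where "C1 = (a*p) choose (b*p)"
  define C2 where "C2 = a choose b"
  define X where "X = FF p (b*p) * FF p ((a-b)*p)"
  define Y where "Y = FF p (a*p)"
  define e where "e = multiplicity p C1"
  have p0: "p > 0" using assms prime_gt_0_nat by blast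
  have eq: "X * C1 = C2 * Y" using key_identity[OF p0 assms(2)] unfolding X_def Y_def C1_def C2_def .
  have cX: "coprime p X" unfolding X_def using FF_coprime[OF assms(1)] by simp
  have cY: "coprime p Y" unfolding Y_def using FF_coprime[OF assms(1)] by simp
  have "p ^ e dvd C1" unfolding e_def by (rule multiplicity_dvd)
  then have "p ^ e dvd C2 * Y" using eq by (metis dvd_mult2 mult.commute)
  moreover have "coprime (p ^ e) Y" using cY by simp
  ultimately have dC2: "p ^ e dvd C2" using coprime_dvd_mult_left_iff by blast
  have a_eq: "a*p = (a-b)*p + b*p" using assms(2) by (simp add: add_mult_distrib[symmetric])
  have "[Y = FF p ((a-b)*p) * FF p (b*p)] (mod p ^ q)"
    unfolding Y_def a_eq by (rule FF_cong) (simp_all add: assms(3))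
  then have "[Y = X] (mod p ^ q)" unfolding X_def by (simp add: mult.commute)
  then have "[int Y = int X] (mod int p ^ q)" by (metis cong_int_iff of_nat_power)
  then have dq: "int p ^ q dvd int Y - int X" by (metis cong_iff_dvd_diff cong_sym)
  have dC2i: "int p ^ e dvd int C2" using dC2 by (metis of_nat_dvd_iff of_nat_power)
  have "int p ^ (e + q) dvd int C2 * (int Y - int X)"
    using mult_dvd_mono[OF dC2i dq] by (simp add: power_add)
  moreover have "int C2 * (int Y - int X) = int X * (int C1 - int C2)"
    using arg_cong[OF eq, of int] by (simp add: algebra_simps)
  ultimately have "int p ^ (e + q) dvd int X * (int C1 - int C2)" by simp
  moreover have "coprime (int p ^ (e + q)) (int X)" using cX by simp
  ultimately have "int p ^ (e + q) dvd int C1 - int C2"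
    using coprime_dvd_mult_right_iff by blast
  then show ?thesis unfolding e_def C1_def C2_def .
qed

theorem corollary15:
  fixes p q m k r s :: nat
  assumes "prime p" and "odd p" and "q \<ge> 1"
    and "s \<ge> q" and "r \<ge> s"
    and "k * p ^ s \<le> m * p ^ r"
  shows "let e0 = multiplicity p ((m * p ^ r) choose (k * p ^ s)) in
    int p ^ (e0 + q) dvd
      int ((m * p ^ r) choose (k * p ^ s)) - int ((m * p ^ (r - 1)) choose (k * p ^ (s - 1)))"
proof -
  define a where "a = m * p ^ (r - 1)"
  define b where "b = k * p ^ (s - 1)"
  have p0: "p > 0" using assms prime_gt_0_nat by blast
  have r1: "r = Suc (r - 1)" using assms by simp
  have s1: "s = Suc (s - 1)" using assms by simp
  have pr: "p ^ r = p ^ (r - 1) * p" using r1 by (metis power_Suc2)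
  have ps: "p ^ s = p ^ (s - 1) * p" using s1 by (metis power_Suc2)
  have ap: "a * p = m * p ^ r" unfolding a_def pr by simp
  have bp: "b * p = k * p ^ s" unfolding b_def ps by simp
  have ba: "b \<le> a" using assms(6) p0 unfolding ap[symmetric] bp[symmetric] by simp
  have "p ^ q dvd p ^ r" using assms by (simp add: le_imp_power_dvd)
  then have d1: "p ^ q dvd m * p ^ r" by (rule dvd_mult)
  have "p ^ q dvd p ^ s" using assms by (simp add: le_imp_power_dvd)
  then have d2: "p ^ q dvd k * p ^ s" by (rule dvd_mult)
  have "(a - b) * p = m * p ^ r - k * p ^ s" using ap bp by (simp add: diff_mult_distrib)
  then have "p ^ q dvd (a - b) * p" using d1 d2 by (simp add: dvd_diff_nat)
  from main[OF assms(1) ba this]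
  have "int p ^ (multiplicity p ((m * p ^ r) choose (k * p ^ s)) + q) dvd
      int ((m * p ^ r) choose (k * p ^ s)) - int (a choose b)" by (simp only: ap bp)
  then show ?thesis by (simp only: Let_def a_def b_def)
qed

end
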